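(* Let $\alpha\in\Delta_+$, and let $r,s,k\in\mathbb{Z}_{>0}$ and $K\in\mathbb{Z}_{\ge0}$ satisfy $r+s\ge kr+K$. Then, in $U(\mathfrak{sl}_{2,\alpha}[t])$, \[\big[e_\alpha,\ {}_kf_\alpha(r,s)\big]\in \sum_{(r',s')}U\big(t\,\mathfrak{sl}_{2,\alpha}[t]\big)\,{}_kf_\alpha(r',s')+U\big(t\,\mathfrak{sl}_{2,\alpha}[t]\big)\,t\mathfrak{b}_\alpha[t],\] where the sum runs over all pairs $r',s'\in\mathbb{Z}_{>0}$ with $r'+s'\ge kr'+K$.
   Context: $\mathfrak g=\mathfrak{sl}_{n+1}(\mathbb C)$, positive roots $\Delta_+$; for $\alpha\in\Delta_+$, $e_\alpha,f_\alpha$ are root vectors with $[e_\alpha,f_\alpha]=h_\alpha$ the coroot. $\mathfrak{sl}_{2,\alpha}=\mathbb{C}e_\alpha\oplus\mathbb{C}h_\alpha\oplus\mathbb{C}f_\alpha$, $\mathfrak{b}_\alpha=\mathbb{C}e_\alpha\oplus\mathbb{C}h_\alpha$. For a Lie algebra $\mathfrak a$, $\mathfrak a[t]=\mathfrak a\otimes\mathbb C[t]$ with bracket $[x\otimes f,y\otimes g]=[x,y]\otimes fg$, and $t\mathfrak a[t]=\mathfrak a\otimes t\mathbb C[t]$; $e_\alpha$ denotes $e_\alpha\otimes 1$. For $X$ in a Lie algebra, $X^{(b)}=X^b/b!$. For $r,s\in\mathbb{Z}_{\ge0}$ let $\mathbf{S}(r,s)=\{(b_j)_{j\ge0}: b_j\in\mathbb{Z}_{\ge0},\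 \sum_j b_j=r,\ \sum_j jb_j=s\}$, and for $k\in\mathbb Z_{\ge0}$ let ${}_k\mathbf{S}(r,s)$ be the subset with $b_j=0$ for all $j<k$. For $x\in\mathfrak g$ define ${}_kx(r,s)=\sum_{(b_j)\in{}_k\mathbf{S}(r,s)}(x\otimes t^k)^{(b_k)}(x\otimes t^{k+1})^{(b_{k+1})}\cdots(x\otimes t^s)^{(b_s)}\in U(\mathfrak g[t])$ (zero if the index set is empty). *)

theory Defs
  imports Complex_Main "HOL-Library.Function_Algebras"
begin

text \<open>Generators of the loop algebra sl2[t] (the copy sl_{2,alpha}[t] inside sl_{n+1}[t]):
  E j = e_alpha (x) t^j, H j = h_alpha (x) t^j, F j = f_alpha (x) t^j.\<close>
datatype gen = E nat | H nat | F nat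

fun deg :: "gen \<Rightarrow> nat" where
  "deg (E j) = j" | "deg (H j) = j" | "deg (F j) = j"

text \<open>Free associative algebra over C on the generators: coefficient functions on words
  (all elements we construct have finite support); addition is pointwise.\<close>
type_synonym fa = "gen list \<Rightarrow> complex"

definition fa_mult :: "fa \<Rightarrow> fa \<Rightarrow> fa" where
  "fa_mult p q = (\<lambda>w. \<Sum>i\<le>length w. p (take i w) * q (drop i w))"

definition fa_smult :: "complex \<Rightarrow> fa \<Rightarrow> fa" where
  "fa_smult c p = (\<lambda>w. c * p w)"

definition fa_mon :: "gen list \<Rightarrow> fa" where
  "fa_mon u = (\<lambda>w. if w = u then 1 else 0)"

definition fa_one :: fa where "fa_one = fa_mon []"

definition fa_gen :: "gen \<Rightarrow> fa" where "fa_gen g = fa_mon [g]"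

definition fa_pow :: "fa \<Rightarrow> nat \<Rightarrow> fa" where
  "fa_pow p n = ((fa_mult p) ^^ n) fa_one"

definition fa_divpow :: "fa \<Rightarrow> nat \<Rightarrow> fa" where
  "fa_divpow p b = fa_smult (1 / of_nat (fact b)) (fa_pow p b)"

definition fa_comm :: "fa \<Rightarrow> fa \<Rightarrow> fa" where
  "fa_comm p q = fa_mult p q - fa_mult q p"

fun lie_gen :: "gen \<Rightarrow> gen \<Rightarrow> fa" where
  "lie_gen (E a) (E b) = 0"
| "lie_gen (E a) (H b) = fa_smult (-2) (fa_gen (E (a+b)))"
| "lie_gen (E a) (F b) = fa_gen (H (a+b))"
| "lie_gen (H a) (E b) = fa_smult 2 (fa_gen (E (a+b)))"
| "lie_gen (H a) (H b) = 0"
| "lie_gen (H a) (F b) = fa_smult (-2) (fa_gen (F (a+b)))"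
| "lie_gen (F a) (E b) = fa_smult (-1) (fa_gen (H (a+b)))"
| "lie_gen (F a) (H b) = fa_smult 2 (fa_gen (F (a+b)))"
| "lie_gen (F a) (F b) = 0"

definition rel :: "gen \<Rightarrow> gen \<Rightarrow> fa" where
  "rel g1 g2 = fa_comm (fa_gen g1) (fa_gen g2) - lie_gen g1 g2"

text \<open>Spanning set of the two-sided ideal defining U(sl2[t]) as a quotient of the free algebra.\<close>
definition U_rels :: "fa set" where
  "U_rels = {fa_mult (fa_mon u) (fa_mult (rel g1 g2) (fa_mon v)) | u v g1 g2. True}"

inductive_set fa_span :: "fa set \<Rightarrow> fa set" for S :: "fa set" where
  span_zero: "0 \<in> fa_span S"
| span_base: "x \<in> S \<Longrightarrow> x \<in> fa_span S"
| span_add: "x \<in> fa_span S \<Longrightarrow> y \<in> fa_span S \<Longrightarrow> x + y \<in> fa_span S"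
| span_smult: "x \<in> fa_span S \<Longrightarrow> fa_smult c x \<in> fa_span S"

text \<open>Words in generators of t sl2[t] (positive degree); their images span U(t sl2[t]).\<close>
definition pos_word :: "gen list \<Rightarrow> bool" where
  "pos_word u = (\<forall>g\<in>set u. 1 \<le> deg g)"

fun is_borel :: "gen \<Rightarrow> bool" where
  "is_borel (E _) = True" | "is_borel (H _) = True" | "is_borel (F _) = False"

text \<open>k S(r,s): sequences (b_j) with b_j = 0 for j < k, sum b_j = r, sum j b_j = s
  (b_j = 0 for j > s is automatic when j b_j <= s, j \<ge> 1; for j = 0 > s impossible).\<close>
definition kS :: "nat \<Rightarrow> nat \<Rightarrow> nat \<Rightarrow> (nat \<Rightarrow> nat) set" where
  "kS k r s = {b. (\<forall>j. (j < k \<or> s < j) \<longrightarrow> b j = 0) \<and> (\<Sum>j\<le>s. b j) = r \<and> (\<Sum>j\<le>s. j * b j) = s}"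

text \<open>k x(r,s) for x given by X j = x (x) t^j (here x = f: X = F).\<close>
definition kx :: "(nat \<Rightarrow> gen) \<Rightarrow> nat \<Rightarrow> nat \<Rightarrow> nat \<Rightarrow> fa" where
  "kx X k r s = (\<Sum>b\<in>kS k r s.
      foldr (\<lambda>j acc. fa_mult (fa_divpow (fa_gen (X j)) (b j)) acc) [k..<Suc s] fa_one)"

end

theory Submission
  imports Defs "HOL-Library.Poly_Mapping"
begin


instantiation list :: (type) monoid_add
begin
definition zero_list_def: "0 = []"
definition plus_list_def: "xs + ys = xs @ ys"
instance by standard (auto simp: zero_list_def plus_list_def)
end

type_synonym R = "gen list \<Rightarrow>\<^sub>0 complex"

lemma inner_when:
  "(\<Sum>q. (g q when w = l + q)) = (if \<exists>i\<le>length w. l = take i w then g (drop (length l) w) else (0::complex))"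
proof (cases "\<exists>i\<le>length w. l = take i w")
  case True
  then obtain i where i: "i \<le> length w" "l = take i w" by blast
  have "(\<Sum>q. (g q when w = l + q)) = (\<Sum>q. if q = drop (length l) w then g q else 0)"
    apply (rule arg_cong[where f=Sum_any]) apply (rule ext)
    using i by (auto simp: plus_list_def when_def) (metis append_eq_conv_conj length_take min_absorb2)
  then show ?thesis using True by simp
next
  case False
  have "\<And>q. w \<noteq> l + q"
  proof
    fix q assume "w = l + q"
    then have "l = take (length l) w" "length l \<le> length w" by (auto simp: plus_list_def)
    then show False using False by blast
  qed
  then have "(\<lambda>q. g q when w = l + q) = (\<lambda>q. 0)" by (auto simp: when_def)
  then have "(\<Sum>q. g q when w = l + q) = (\<Sum>q::'a list. 0)" by (simp only:)
  then show ?thesis using False by auto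
qed


lemma lookup_mult_list:
  fixes p q :: R
  shows "Poly_Mapping.lookup (p * q) w = (\<Sum>i\<le>length w. Poly_Mapping.lookup p (take i w) * Poly_Mapping.lookup q (drop i w))"
proof -
  have "Poly_Mapping.lookup (p * q) w = (\<Sum>l. Poly_Mapping.lookup p l * (if \<exists>i\<le>length w. l = take i w then Poly_Mapping.lookup q (drop (length l) w) else 0))"
    unfolding lookup_mult by (subst inner_when) (rule refl)
  also have "\<dots> = (\<Sum>l\<in>(\<lambda>i. take i w) ` {..length w}. Poly_Mapping.lookup p l * (if \<exists>i\<le>length w. l = take i w then Poly_Mapping.lookup q (drop (length l) w) else 0))"
    by (rule Sum_any.expand_superset) auto
  also have "\<dots> = (\<Sum>i\<le>length w. Poly_Mapping.lookup p (take i w) * Poly_Mapping.lookup q (drop i w))"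
  proof (subst sum.reindex)
    show "inj_on (\<lambda>i. take i w) {..length w}"
    proof (rule inj_onI)
      fix i j assume "i \<in> {..length w}" "j \<in> {..length w}" "take i w = take j w"
      then have "length (take i w) = length (take j w)" by simp
      then show "i = j" using \<open>i \<in> _\<close> \<open>j \<in> _\<close> by (simp add: min_absorb1)
    qed
  next
    show "sum ((\<lambda>l. Poly_Mapping.lookup p l * (if \<exists>i\<le>length w. l = take i w then Poly_Mapping.lookup q (drop (length l) w) else 0)) \<circ> (\<lambda>i. take i w)) {..length w} = (\<Sum>i\<le>length w. Poly_Mapping.lookup p (take i w) * Poly_Mapping.lookup q (drop i w))"
    proof (rule sum.cong[OF refl])
      fix i assume "i \<in> {..length w}"
      then have a: "\<exists>j\<le>length w. take i w = take j w" and b: "length (take i w) = i" by auto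
      show "((\<lambda>l. Poly_Mapping.lookup p l * (if \<exists>i\<le>length w. l = take i w then Poly_Mapping.lookup q (drop (length l) w) else 0)) \<circ> (\<lambda>i. take i w)) i = Poly_Mapping.lookup p (take i w) * Poly_Mapping.lookup q (drop i w)"
        by (simp only: comp_def a b if_True)
    qed
  qed
  finally show ?thesis .
qed

lemma lookup_mult_fa: fixes p q :: R shows "Poly_Mapping.lookup (p * q) = fa_mult (Poly_Mapping.lookup p) (Poly_Mapping.lookup q)"
  by (rule ext) (simp only: lookup_mult_list fa_mult_def)


abbreviation lk :: "R \<Rightarrow> fa" where "lk \<equiv> Poly_Mapping.lookup"

definition Mon :: "gen list \<Rightarrow> R" where "Mon u = Poly_Mapping.single u 1"
definition Gn :: "gen \<Rightarrow> R" where "Gn g = Mon [g]"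
definition sc :: "complex \<Rightarrow> R" where "sc c = Poly_Mapping.single [] c"

lemma lk_Mon: "lk (Mon u) = fa_mon u"
  by (rule ext) (auto simp: Mon_def lookup_single fa_mon_def when_def)

lemma lk_Gn: "lk (Gn g) = fa_gen g"
  by (simp add: Gn_def lk_Mon fa_gen_def)

lemma Mon_mult: "Mon u * Mon v = Mon (u @ v)"
  by (simp add: Mon_def mult_single plus_list_def)

lemma Mon_Nil: "Mon [] = 1"
  by (metis Mon_def single_one zero_list_def)

lemma sc_1: "sc 1 = 1" by (metis sc_def single_one zero_list_def)
lemma sc_add: "sc (a + b) = sc a + sc b" by (simp add: sc_def single_add)
lemma sc_mult: "sc (a * b) = sc a * sc b" by (simp add: sc_def mult_single plus_list_def)
lemma sc_uminus: "sc (- a) = - sc a" by (simp add: sc_def single_uminus)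
lemma sc_diff: "sc (a - b) = sc a - sc b" by (simp add: sc_def single_diff)
lemma sc_0: "sc 0 = 0" by (simp add: sc_def)
lemma sc_of_nat: "sc (of_nat n) = of_nat n"
  by (induct n) (simp_all add: sc_0 sc_add sc_1)
lemma sc_of_int: "sc (of_int n) = of_int n"
  by (cases n rule: int_cases) (simp_all add: sc_of_nat sc_uminus sc_diff sc_1)

lemma lk_sc_mult: "lk (sc c * p) w = c * lk p w"
proof (cases w)
  case Nil then show ?thesis by (simp add: lookup_mult_list sc_def)
next
  case (Cons x xs)
  have "lk (sc c * p) w = (\<Sum>i\<le>Suc (length xs). lk (sc c) (take i w) * lk p (drop i w))"
    by (simp add: lookup_mult_list Cons)
  also have "\<dots> = lk (sc c) (take 0 w) * lk p (drop 0 w) + (\<Sum>i\<le>length xs. lk (sc c) (take (Suc i) w) * lk p (drop (Suc i) w))"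
    by (rule sum.atMost_Suc_shift)
  also have "\<dots> = c * lk p w" by (simp add: sc_def lookup_single Cons)
  finally show ?thesis .
qed

lemma lk_mult_sc: "lk (p * sc c) w = lk p w * c"
proof -
  have "lk (p * sc c) w = (\<Sum>i\<in>insert (length w) {..<length w}. lk p (take i w) * lk (sc c) (drop i w))"
    by (simp add: lookup_mult_list lessThan_Suc_atMost[symmetric])
  also have "\<dots> = lk p w * c" by (simp add: sc_def lookup_single)
  finally show ?thesis .
qed

lemma sc_commute: "sc c * p = p * sc c"
  by (rule poly_mapping_eqI) (simp add: lk_sc_mult lk_mult_sc mult.commute)

lemma lk_sc_fun: "lk (sc c * p) = fa_smult c (lk p)"
  by (rule ext) (simp add: lk_sc_mult fa_smult_def)

lemma single_sc_Mon: "Poly_Mapping.single w c = sc c * Mon w"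
  by (simp add: sc_def Mon_def mult_single plus_list_def)

lemma poly_sum_mon: "p = (\<Sum>w\<in>Poly_Mapping.keys p. sc (lk p w) * Mon w)"
proof (rule poly_mapping_eqI)
  fix x
  have "lk (\<Sum>w\<in>Poly_Mapping.keys p. sc (lk p w) * Mon w) x = (\<Sum>w\<in>Poly_Mapping.keys p. if w = x then lk p w else 0)"
    by (simp add: lookup_sum single_sc_Mon[symmetric] lookup_single when_def eq_commute)
  also have "\<dots> = lk p x" by (subst sum.delta) (auto simp: in_keys_iff)
  finally show "lk p x = lk (\<Sum>w\<in>Poly_Mapping.keys p. sc (lk p w) * Mon w) x" ..
qed

lemma lk_add: "lk (x + y) = lk x + lk y" by (rule ext) (simp add: lookup_add)
lemma lk_minus: "lk (x - y) = lk x - lk y" by (rule ext) (simp add: lookup_minus)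
lemma lk_zero: "lk 0 = 0" by (rule ext) simp
lemma lk_one: "lk 1 = fa_one" by (simp add: fa_one_def Mon_Nil[symmetric] lk_Mon)

lemma fun_sum_apply: "(sum f A) x = sum (\<lambda>a. f a x) A"
  by (induction A rule: infinite_finite_induct) auto

lemma lk_sum: "lk (sum f A) = sum (\<lambda>a. lk (f a)) A"
  by (rule ext) (simp add: lookup_sum fun_sum_apply)

lemma lk_power: "lk (x ^ n) = fa_pow (lk x) n"
  by (induct n) (simp_all add: fa_pow_def lk_one lookup_mult_fa)

fun lieR :: "gen \<Rightarrow> gen \<Rightarrow> R" where
  "lieR (E a) (E b) = 0"
| "lieR (E a) (H b) = sc (-2) * Gn (E (a+b))"
| "lieR (E a) (F b) = Gn (H (a+b))"
| "lieR (H a) (E b) = sc 2 * Gn (E (a+b))"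
| "lieR (H a) (H b) = 0"
| "lieR (H a) (F b) = sc (-2) * Gn (F (a+b))"
| "lieR (F a) (E b) = sc (-1) * Gn (H (a+b))"
| "lieR (F a) (H b) = sc 2 * Gn (F (a+b))"
| "lieR (F a) (F b) = 0"

lemma lk_lieR: "lk (lieR g1 g2) = lie_gen g1 g2"
  by (cases g1; cases g2) (simp_all add: lk_sc_fun lk_Gn lk_zero)

definition relR :: "gen \<Rightarrow> gen \<Rightarrow> R" where
  "relR g1 g2 = Gn g1 * Gn g2 - Gn g2 * Gn g1 - lieR g1 g2"

lemma lk_relR: "lk (relR g1 g2) = rel g1 g2"
  by (simp add: relR_def rel_def fa_comm_def lk_minus lookup_mult_fa lk_Gn lk_lieR)

inductive_set Irel :: "R set" where
  I0: "0 \<in> Irel"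
| Ib: "Mon u * relR g1 g2 * Mon v \<in> Irel"
| Iadd: "x \<in> Irel \<Longrightarrow> y \<in> Irel \<Longrightarrow> x + y \<in> Irel"
| Isc: "x \<in> Irel \<Longrightarrow> sc c * x \<in> Irel"

lemma Iuminus: "x \<in> Irel \<Longrightarrow> - x \<in> Irel"
  using Isc[of x "-1"] by (simp add: sc_uminus sc_1)

lemma Idiff: "x \<in> Irel \<Longrightarrow> y \<in> Irel \<Longrightarrow> x - y \<in> Irel"
  using Iadd Iuminus by (metis diff_conv_add_uminus)

lemma Isum: "(\<And>a. a \<in> A \<Longrightarrow> f a \<in> Irel) \<Longrightarrow> sum f A \<in> Irel"
  by (induction A rule: infinite_finite_induct) (auto intro: I0 Iadd)

lemma Irel_Mon_left: "x \<in> Irel \<Longrightarrow> Mon w * x \<in> Irel"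
proof (induction rule: Irel.induct)
  case I0 then show ?case by (simp add: Irel.I0)
next
  case (Ib u g1 g2 v)
  then show ?case using Irel.Ib[of "w @ u" g1 g2 v] by (simp add: mult.assoc[symmetric] Mon_mult)
next
  case (Iadd x y) then show ?case by (simp add: distrib_left Irel.Iadd)
next
  case (Isc x c)
  have "Mon w * (sc c * x) = sc c * (Mon w * x)"
    by (metis mult.assoc sc_commute)
  then show ?case using Isc by (simp add: Irel.Isc)
qed

lemma Irel_Mon_right: "x \<in> Irel \<Longrightarrow> x * Mon w \<in> Irel"
proof (induction rule: Irel.induct)
  case I0 then show ?case by (simp add: Irel.I0)
next
  case (Ib u g1 g2 v)
  then show ?case using Irel.Ib[of u g1 g2 "v @ w"] by (simp add: mult.assoc Mon_mult)
next
  case (Iadd x y) then show ?case by (simp add: distrib_right Irel.Iadd)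
next
  case (Isc x c)
  then show ?case by (simp add: Irel.Isc mult.assoc)
qed

lemma Irel_left: "x \<in> Irel \<Longrightarrow> a * x \<in> Irel"
proof -
  assume x: "x \<in> Irel"
  have "a * x = (\<Sum>w\<in>Poly_Mapping.keys a. sc (lk a w) * (Mon w * x))"
    by (subst poly_sum_mon[of a]) (simp add: sum_distrib_right mult.assoc)
  also have "\<dots> \<in> Irel" by (rule Isum) (intro Isc Irel_Mon_left x)
  finally show ?thesis .
qed

lemma Irel_right: "x \<in> Irel \<Longrightarrow> x * a \<in> Irel"
proof -
  assume x: "x \<in> Irel"
  have "x * a = (\<Sum>w\<in>Poly_Mapping.keys a. sc (lk a w) * (x * Mon w))"
    apply (subst poly_sum_mon[of a])
    apply (simp add: sum_distrib_left)
    by (metis (no_types, lifting) mult.assoc sc_commute)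
  also have "\<dots> \<in> Irel" by (rule Isum) (intro Isc Irel_Mon_right x)
  finally show ?thesis .
qed

lemma lk_Irel: "x \<in> Irel \<Longrightarrow> lk x \<in> fa_span U_rels"
proof (induction rule: Irel.induct)
  case I0 then show ?case by (simp only: lk_zero) (rule fa_span.span_zero)
next
  case (Ib u g1 g2 v)
  have "lk (Mon u * relR g1 g2 * Mon v) = fa_mult (fa_mon u) (fa_mult (rel g1 g2) (fa_mon v))"
    by (simp add: mult.assoc lookup_mult_fa lk_Mon lk_relR)
  then show ?case by (auto intro!: fa_span.span_base simp: U_rels_def)
next
  case (Iadd x y) then show ?case by (simp only: lk_add) (rule fa_span.span_add)
next
  case (Isc x c) then show ?case by (simp add: lk_sc_fun fa_span.span_smult)
qed

lemma fa_span_mono: "x \<in> fa_span A \<Longrightarrow> A \<subseteq> B \<Longrightarrow> x \<in> fa_span B"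
  by (induction rule: fa_span.induct) (auto intro: fa_span.intros)


lemma lk_mult_Nil: "lk (a * b) [] = lk a [] * lk b []"
  by (simp add: lookup_mult_list)

lemma lk_Gn_Nil: "lk (Gn g) [] = 0"
  by (simp add: Gn_def Mon_def lookup_single)

lemma lk_relR_Nil: "lk (relR g1 g2) [] = 0"
  by (cases g1; cases g2) (simp_all add: relR_def lookup_minus lk_mult_Nil lk_Gn_Nil lk_sc_mult)

lemma lk_Irel_Nil: "x \<in> Irel \<Longrightarrow> lk x [] = 0"
  by (induction rule: Irel.induct) (simp_all add: lk_mult_Nil lk_relR_Nil lookup_add lk_sc_mult)

lemma one_notin_Irel: "(1::R) \<notin> Irel"
proof
  assume "(1::R) \<in> Irel"
  then have "lk 1 [] = 0" by (rule lk_Irel_Nil)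
  then show False by (simp add: lookup_one zero_list_def)
qed

lemma m_one_notin_Irel: "(-1::R) \<notin> Irel"
proof
  assume "(-1::R) \<in> Irel"
  then have "lk (-1) [] = 0" by (rule lk_Irel_Nil)
  then show False by (simp add: lookup_one zero_list_def)
qed

definition Req :: "R \<Rightarrow> R \<Rightarrow> bool" where "Req x y \<longleftrightarrow> x - y \<in> Irel"

lemma equivp_Req: "equivp Req"
proof (rule equivpI)
  show "reflp Req" by (rule reflpI) (simp add: Req_def I0)
  show "symp Req"
  proof (rule sympI)
    fix x y assume "Req x y"
    then have "- (x - y) \<in> Irel" using Iuminus[of "x - y"] by (simp add: Req_def)
    then show "Req y x" by (simp add: Req_def)
  qed
  show "transp Req"
  proof (rule transpI)
    fix x y z assume "Req x y" "Req y z"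
    then have "(x - y) + (y - z) \<in> Irel" using Iadd[of "x - y" "y - z"] by (simp add: Req_def)
    then show "Req x z" by (simp add: Req_def)
  qed
qed

quotient_type Q = R / Req
  by (rule equivp_Req)

instantiation Q :: ring_1
begin
lift_definition zero_Q :: Q is 0 .
lift_definition one_Q :: Q is 1 .
lift_definition plus_Q :: "Q \<Rightarrow> Q \<Rightarrow> Q" is "(+)"
proof -
  fix a b c d :: R assume "Req a b" "Req c d"
  then have "(a - b) + (c - d) \<in> Irel" using Iadd[of "a - b" "c - d"] by (simp add: Req_def)
  then show "Req (a + c) (b + d)" by (simp add: Req_def algebra_simps)
qed
lift_definition uminus_Q :: "Q \<Rightarrow> Q" is "uminus"
proof -
  fix a b :: R assume "Req a b"
  then have "- (a - b) \<in> Irel" using Iuminus[of "a - b"] by (simp add: Req_def)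
  then show "Req (- a) (- b)" by (simp add: Req_def algebra_simps)
qed
lift_definition minus_Q :: "Q \<Rightarrow> Q \<Rightarrow> Q" is "(-)"
proof -
  fix a b c d :: R assume "Req a b" "Req c d"
  then have "(a - b) - (c - d) \<in> Irel" using Idiff[of "a - b" "c - d"] by (simp add: Req_def)
  then show "Req (a - c) (b - d)" by (simp add: Req_def algebra_simps)
qed
lift_definition times_Q :: "Q \<Rightarrow> Q \<Rightarrow> Q" is "(*)"
proof -
  fix a b c d :: R assume "Req a b" "Req c d"
  then have "(a - b) * c \<in> Irel" "b * (c - d) \<in> Irel" by (auto simp: Req_def intro: Irel_left Irel_right)
  then have "(a - b) * c + b * (c - d) \<in> Irel" by (rule Iadd)
  then show "Req (a * c) (b * d)" by (simp add: Req_def algebra_simps)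
qed
instance
  apply standard
  apply (transfer, simp add: Req_def I0 algebra_simps m_one_notin_Irel)+
  done
end

definition q :: "R \<Rightarrow> Q" where "q = abs_Q"

lemma q_add: "q (x + y) = q x + q y" by (simp add: q_def plus_Q.abs_eq)
lemma q_mult: "q (x * y) = q x * q y" by (simp add: q_def times_Q.abs_eq)
lemma q_minus: "q (x - y) = q x - q y" by (simp add: q_def minus_Q.abs_eq)
lemma q_uminus: "q (- x) = - q x" by (simp add: q_def uminus_Q.abs_eq)
lemma q_0: "q 0 = 0" by (simp add: q_def zero_Q_def)
lemma q_1: "q 1 = 1" by (simp add: q_def one_Q_def)
lemma q_eq: "q x = q y \<longleftrightarrow> x - y \<in> Irel"
  by (simp add: q_def Q.abs_eq_iff Req_def)
lemma q_sum: "q (sum f A) = (\<Sum>a\<in>A. q (f a))"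
  by (induction A rule: infinite_finite_induct) (simp_all add: q_0 q_add)
lemma q_power: "q (x ^ n) = q x ^ n"
  by (induct n) (simp_all add: q_1 q_mult)
lemma q_surj: "\<exists>x. y = q x"
  unfolding q_def by (induct y rule: Q.abs_induct) auto

definition scQ :: "complex \<Rightarrow> Q" where "scQ c = q (sc c)"

lemma scQ_commute: "scQ c * y = y * scQ c"
  using q_surj[of y] by (auto simp: scQ_def q_mult[symmetric] sc_commute)
lemma scQ_mult: "scQ (a * b) = scQ a * scQ b" by (simp add: scQ_def sc_mult q_mult)
lemma scQ_add: "scQ (a + b) = scQ a + scQ b" by (simp add: scQ_def sc_add q_add)
lemma scQ_diff: "scQ (a - b) = scQ a - scQ b" by (simp add: scQ_def sc_diff q_minus)
lemma scQ_1: "scQ 1 = 1" by (simp add: scQ_def sc_1 q_1)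
lemma scQ_0: "scQ 0 = 0" by (simp add: scQ_def sc_0 q_0)
lemma scQ_of_nat: "scQ (of_nat n) = of_nat n"
  by (induct n) (simp_all add: scQ_0 scQ_1 scQ_add)
lemma scQ_uminus: "scQ (- a) = - scQ a" by (simp add: scQ_def sc_uminus q_uminus)
lemma scQ_of_int: "scQ (of_int n) = of_int n"
  by (cases n rule: int_cases) (simp_all add: scQ_of_nat scQ_diff scQ_1 scQ_0 scQ_uminus)

definition ff :: "nat \<Rightarrow> Q" where "ff j = q (Gn (F j))"
definition hh :: "nat \<Rightarrow> Q" where "hh j = q (Gn (H j))"
definition ee :: "nat \<Rightarrow> Q" where "ee j = q (Gn (E j))"

lemma q_rel: "q (Gn g1) * q (Gn g2) - q (Gn g2) * q (Gn g1) = q (lieR g1 g2)"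
proof -
  have "relR g1 g2 \<in> Irel" using Ib[of "[]" g1 g2 "[]"] by (simp add: Mon_Nil)
  then have "q (relR g1 g2) = q 0" by (simp add: q_eq I0 )
  then show ?thesis by (simp add: relR_def q_minus q_mult q_0)
qed

lemma rel_EF: "ee 0 * ff j = ff j * ee 0 + hh j"
  using q_rel[of "E 0" "F j"] by (simp add: ee_def ff_def hh_def algebra_simps)

lemma rel_HF: "hh a * ff b = ff b * hh a - 2 * ff (a + b)"
proof -
  have "q (sc (-2)) = - 2" using scQ_of_int[of "-2"] by (simp add: scQ_def)
  then show ?thesis using q_rel[of "H a" "F b"] by (simp add: ee_def ff_def hh_def q_mult algebra_simps)
qed

lemma rel_FF: "ff a * ff b = ff b * ff a"
  using q_rel[of "F a" "F b"] by (simp add: ff_def q_0)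


definition dpR :: "R \<Rightarrow> nat \<Rightarrow> R" where "dpR x n = sc (1 / of_nat (fact n)) * x ^ n"

definition KXR :: "nat \<Rightarrow> nat \<Rightarrow> nat \<Rightarrow> R" where
  "KXR k r s = (\<Sum>b\<in>kS k r s. foldr (\<lambda>j acc. dpR (Gn (F j)) (b j) * acc) [k..<Suc s] 1)"

lemma lk_dpR: "lk (dpR x n) = fa_divpow (lk x) n"
  by (simp only: dpR_def lk_sc_fun lk_power fa_divpow_def)

lemma lk_foldr: "lk (foldr (\<lambda>j acc. dpR (Gn (X j)) (b j) * acc) js 1)
   = foldr (\<lambda>j acc. fa_mult (fa_divpow (fa_gen (X j)) (b j)) acc) js fa_one"
  by (induct js) (simp_all add: lk_one lookup_mult_fa lk_dpR lk_Gn)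

lemma lk_KXR: "lk (KXR k r s) = kx F k r s"
  by (simp add: KXR_def kx_def lk_sum lk_foldr)

inductive_set Tset :: "nat \<Rightarrow> nat \<Rightarrow> R set" for k K where
  T_I: "x \<in> Irel \<Longrightarrow> x \<in> Tset k K"
| T_P: "pos_word u \<Longrightarrow> 0 < r' \<Longrightarrow> 0 < s' \<Longrightarrow> k * r' + K \<le> r' + s' \<Longrightarrow> Mon u * KXR k r' s' \<in> Tset k K"
| T_B: "pos_word u \<Longrightarrow> is_borel g \<Longrightarrow> 1 \<le> deg g \<Longrightarrow> Mon u * Gn g \<in> Tset k K"
| T_add: "x \<in> Tset k K \<Longrightarrow> y \<in> Tset k K \<Longrightarrow> x + y \<in> Tset k K"
| T_sc: "x \<in> Tset k K \<Longrightarrow> sc c * x \<in> Tset k K"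

lemma lk_Tset: "x \<in> Tset k K \<Longrightarrow> lk x \<in> fa_span
          ({fa_mult (fa_mon u) (kx F k r' s') | u r' s'.
               pos_word u \<and> 0 < r' \<and> 0 < s' \<and> k * r' + K \<le> r' + s'}
           \<union> {fa_mult (fa_mon u) (fa_gen g) | u g. pos_word u \<and> is_borel g \<and> 1 \<le> deg g}
           \<union> U_rels)"
proof (induction rule: Tset.induct)
  case (T_I x)
  then show ?case using lk_Irel fa_span_mono by blast
next
  case (T_P u r' s')
  have "lk (Mon u * KXR k r' s') = fa_mult (fa_mon u) (kx F k r' s')" by (simp add: lookup_mult_fa lk_Mon lk_KXR)
  then show ?case using T_P by (intro fa_span.span_base) blast
next
  case (T_B u g)
  have "lk (Mon u * Gn g) = fa_mult (fa_mon u) (fa_gen g)" by (simp add: lookup_mult_fa lk_Mon lk_Gn)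
  then show ?case using T_B by (intro fa_span.span_base) blast
next
  case (T_add x y) then show ?case by (simp only: lk_add) (rule fa_span.span_add)
next
  case (T_sc x c) then show ?case by (simp only: lk_sc_fun) (rule fa_span.span_smult)
qed

inductive_set PS :: "R set" where
  PS_mon: "pos_word u \<Longrightarrow> Mon u \<in> PS"
| PS_add: "x \<in> PS \<Longrightarrow> y \<in> PS \<Longrightarrow> x + y \<in> PS"
| PS_sc: "x \<in> PS \<Longrightarrow> sc c * x \<in> PS"

lemma PS_0: "0 \<in> PS" using PS_sc[OF PS_mon[of "[]"], of 0] by (simp add: pos_word_def sc_0)
lemma PS_1: "1 \<in> PS" using PS_mon[of "[]"] by (simp add: pos_word_def Mon_Nil)

lemma PS_mult_mon: "x \<in> PS \<Longrightarrow> pos_word u \<Longrightarrow> Mon u * x \<in> PS"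
proof (induction rule: PS.induct)
  case (PS_mon v) then show ?case by (auto simp: Mon_mult pos_word_def intro!: PS.PS_mon)
next
  case (PS_add x y) then show ?case by (simp add: distrib_left PS.PS_add)
next
  case (PS_sc x c)
  have "Mon u * (sc c * x) = sc c * (Mon u * x)" by (metis mult.assoc sc_commute)
  then show ?case using PS_sc by (simp add: PS.PS_sc)
qed

lemma PS_mult: "x \<in> PS \<Longrightarrow> y \<in> PS \<Longrightarrow> x * y \<in> PS"
proof (induction rule: PS.induct)
  case (PS_mon u) then show ?case by (simp add: PS_mult_mon)
next
  case (PS_add x1 x2) then show ?case by (simp add: distrib_right PS.PS_add)
next
  case (PS_sc x c) then show ?case by (simp add: mult.assoc PS.PS_sc)
qed

lemma PS_sum: "(\<And>a. a \<in> A \<Longrightarrow> f a \<in> PS) \<Longrightarrow> sum f A \<in> PS"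
  by (induction A rule: infinite_finite_induct) (auto intro: PS_0 PS_add)

lemma PS_KXR: "0 < k \<Longrightarrow> KXR k r s \<in> PS"
proof -
  assume k: "0 < k"
  have pw: "\<And>n j. 1 \<le> j \<Longrightarrow> Gn (F j) ^ n \<in> PS"
  proof -
    fix n j :: nat assume "1 \<le> j"
    then have g: "Gn (F j) \<in> PS" unfolding Gn_def by (intro PS_mon) (simp add: pos_word_def)
    show "Gn (F j) ^ n \<in> PS" by (induct n) (simp_all add: PS_1 PS_mult g)
  qed
  have FF: "\<And>js. (\<forall>j\<in>set js. 1 \<le> j) \<Longrightarrow> foldr (\<lambda>j acc. dpR (Gn (F j)) (b j) * acc) js 1 \<in> PS" for b
  proof -
    fix js :: "nat list" show "(\<forall>j\<in>set js. 1 \<le> j) \<Longrightarrow> foldr (\<lambda>j acc. dpR (Gn (F j)) (b j) * acc) js 1 \<in> PS"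
      by (induct js) (auto simp: PS_1 dpR_def intro!: PS_mult PS_sc pw)
  qed
  show ?thesis unfolding KXR_def by (intro PS_sum FF ballI) (use k in \<open>auto simp del: upt_Suc\<close>)
qed

lemma PS_Tset: "x \<in> PS \<Longrightarrow> is_borel g \<Longrightarrow> 1 \<le> deg g \<Longrightarrow> x * Gn g \<in> Tset k K"
proof (induction rule: PS.induct)
  case (PS_mon u) then show ?case by (rule T_B)
next
  case (PS_add x y) then show ?case by (simp add: distrib_right T_add)
next
  case (PS_sc x c) then show ?case by (simp add: mult.assoc T_sc)
qed

definition TQ :: "nat \<Rightarrow> nat \<Rightarrow> Q set" where "TQ k K = q ` Tset k K"

lemma TQ_back: "q x \<in> TQ k K \<Longrightarrow> x \<in> Tset k K"
proof -
  assume "q x \<in> TQ k K"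
  then obtain y where y: "y \<in> Tset k K" "q x = q y" by (auto simp: TQ_def)
  then have "x - y \<in> Irel" by (simp add: q_eq)
  then have "y + (x - y) \<in> Tset k K" using T_add[OF y(1) T_I] by blast
  then show ?thesis by simp
qed

lemma TQ_I: "x \<in> Tset k K \<Longrightarrow> q x \<in> TQ k K" by (simp add: TQ_def)

lemma TQ_add: "a \<in> TQ k K \<Longrightarrow> b \<in> TQ k K \<Longrightarrow> a + b \<in> TQ k K"
  using q_surj[of a] q_surj[of b] by (auto simp: q_add[symmetric] intro!: TQ_I T_add dest!: TQ_back)

lemma TQ_sc: "a \<in> TQ k K \<Longrightarrow> scQ c * a \<in> TQ k K"
  using q_surj[of a] by (auto simp: scQ_def q_mult[symmetric] intro!: TQ_I T_sc dest!: TQ_back)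

lemma TQ_0: "0 \<in> TQ k K" using TQ_I[OF T_I[OF I0]] by (simp add: q_0)

lemma TQ_of_int: "a \<in> TQ k K \<Longrightarrow> of_int c * a \<in> TQ k K"
  using TQ_sc[of a k K "of_int c"] by (simp add: scQ_of_int)

lemma TQ_uminus: "a \<in> TQ k K \<Longrightarrow> - a \<in> TQ k K"
  using TQ_of_int[of a k K "-1"] by simp

lemma TQ_diff: "a \<in> TQ k K \<Longrightarrow> b \<in> TQ k K \<Longrightarrow> a - b \<in> TQ k K"
  using TQ_add TQ_uminus by (metis diff_conv_add_uminus)

lemma TQ_sum: "(\<And>a. a \<in> A \<Longrightarrow> f a \<in> TQ k K) \<Longrightarrow> sum f A \<in> TQ k K"
  by (induction A rule: infinite_finite_induct) (auto intro: TQ_0 TQ_add)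

definition dpQ :: "Q \<Rightarrow> nat \<Rightarrow> Q" where "dpQ x n = scQ (1 / of_nat (fact n)) * x ^ n"
definition monoQ :: "nat \<Rightarrow> nat \<Rightarrow> (nat \<Rightarrow> nat) \<Rightarrow> Q" where
  "monoQ k N b = foldr (\<lambda>j acc. dpQ (ff j) (b j) * acc) [k..<N] 1"
definition Pn :: "nat \<Rightarrow> nat \<Rightarrow> nat \<Rightarrow> Q" where
  "Pn k r s = (\<Sum>b\<in>kS k r s. monoQ k (Suc s) b)"
definition P :: "nat \<Rightarrow> int \<Rightarrow> int \<Rightarrow> Q" where
  "P k r s = (if r < 0 \<or> s < 0 then 0 else Pn k (nat r) (nat s))"

lemma q_foldr: "q (foldr (\<lambda>j acc. dpR (Gn (F j)) (b j) * acc) js 1) = foldr (\<lambda>j acc. dpQ (ff j) (b j) * acc) js 1"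
  by (induct js) (simp_all add: q_1 q_mult dpR_def dpQ_def q_power scQ_def ff_def)

lemma q_KXR: "q (KXR k r s) = Pn k r s"
  by (simp add: KXR_def Pn_def q_sum q_foldr monoQ_def)

lemma TQ_P: "pos_word u \<Longrightarrow> 0 < r' \<Longrightarrow> 0 < s' \<Longrightarrow> k * r' + K \<le> r' + s' \<Longrightarrow> q (Mon u) * Pn k r' s' \<in> TQ k K"
  by (metis T_P TQ_I q_KXR q_mult)

lemma TQ_PH: "0 < k \<Longrightarrow> 1 \<le> j \<Longrightarrow> Pn k r' s' * hh j \<in> TQ k K"
  unfolding hh_def q_KXR[symmetric] q_mult[symmetric]
  by (intro TQ_I PS_Tset PS_KXR) auto

lemma TQ_fP: "1 \<le> m \<Longrightarrow> 0 < r' \<Longrightarrow> 0 < s' \<Longrightarrow> k * r' + K \<le> r' + s' \<Longrightarrow> ff m * Pn k r' s' \<in> TQ k K"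
  using TQ_P[of "[F m]" r' s' k K] by (simp add: pos_word_def ff_def Gn_def)


lemma comm_move: "(a::Q) * b = b * a \<Longrightarrow> a * (b * c) = b * (a * c)"
proof -
  assume h: "a * b = b * a"
  have "a * (b * c) = (a * b) * c" by (simp only: mult.assoc)
  also have "\<dots> = (b * a) * c" by (simp only: h)
  also have "\<dots> = b * (a * c)" by (simp only: mult.assoc)
  finally show ?thesis .
qed

inductive_set FP :: "Q set" where
  FP_f: "ff j \<in> FP"
| FP_1: "1 \<in> FP"
| FP_add: "x \<in> FP \<Longrightarrow> y \<in> FP \<Longrightarrow> x + y \<in> FP"
| FP_mult: "x \<in> FP \<Longrightarrow> y \<in> FP \<Longrightarrow> x * y \<in> FP"
| FP_sc: "x \<in> FP \<Longrightarrow> scQ c * x \<in> FP"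

lemma FP_0: "0 \<in> FP" using FP_sc[OF FP_1, of 0] by (simp add: scQ_0)

lemma ff_comm_FP: "y \<in> FP \<Longrightarrow> ff a * y = y * ff a"
proof (induction rule: FP.induct)
  case (FP_f j) then show ?case by (rule rel_FF)
next
  case FP_1 then show ?case by simp
next
  case (FP_add x y) then show ?case by (simp add: algebra_simps)
next
  case (FP_mult x y)
  have "ff a * (x * y) = (ff a * x) * y" by (simp add: mult.assoc)
  also have "\<dots> = x * (ff a * y)" using FP_mult by (simp add: mult.assoc)
  also have "\<dots> = x * y * ff a" using FP_mult by (simp add: mult.assoc)
  finally show ?case .
next
  case (FP_sc x c)
  have "ff a * (scQ c * x) = scQ c * (ff a * x)" by (rule comm_move) (simp only: scQ_commute)
  then show ?case using FP_sc by (simp add: mult.assoc)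
qed

lemma FP_comm: "x \<in> FP \<Longrightarrow> y \<in> FP \<Longrightarrow> x * y = y * x"
proof (induction rule: FP.induct)
  case (FP_f j) then show ?case by (rule ff_comm_FP)
next
  case FP_1 then show ?case by simp
next
  case (FP_add x1 x2) then show ?case by (simp add: algebra_simps)
next
  case (FP_mult x1 x2)
  have "x1 * x2 * y = x1 * (y * x2)" using FP_mult by (simp add: mult.assoc)
  also have "\<dots> = y * (x1 * x2)" using FP_mult by (simp add: mult.assoc[symmetric])
  finally show ?case .
next
  case (FP_sc x c)
  have "scQ c * x * y = scQ c * (y * x)" using FP_sc by (simp add: mult.assoc)
  also have "\<dots> = y * (scQ c * x)" by (simp only: scQ_commute[of c "y*x"] scQ_commute[of c x] mult.assoc)
  finally show ?case .
qed

lemma FP_sum: "(\<And>a. a \<in> A \<Longrightarrow> f a \<in> FP) \<Longrightarrow> sum f A \<in> FP"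
  by (induction A rule: infinite_finite_induct) (auto intro: FP_0 FP_add)

lemma FP_power: "x \<in> FP \<Longrightarrow> x ^ n \<in> FP"
  by (induct n) (auto intro: FP_1 FP_mult)

lemma FP_dpQ: "dpQ (ff j) n \<in> FP"
  unfolding dpQ_def by (intro FP_sc FP_power FP_f)

lemma FP_foldr: "foldr (\<lambda>j acc. dpQ (ff j) (b j) * acc) js 1 \<in> FP"
  by (induct js) (auto intro: FP_1 FP_mult FP_dpQ)

lemma FP_monoQ: "monoQ k N b \<in> FP"
  unfolding monoQ_def by (rule FP_foldr)

lemma FP_Pn: "Pn k r s \<in> FP"
  unfolding Pn_def by (intro FP_sum FP_monoQ)

lemma FP_P: "P k r s \<in> FP"
  unfolding P_def by (auto intro: FP_Pn FP_0)

lemma ff_P_comm: "ff j * P k r s = P k r s * ff j"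
  by (rule ff_comm_FP[OF FP_P])

lemma dpQ_0: "dpQ x 0 = 1" by (simp add: dpQ_def scQ_1)

lemma monoQ_Suc: "b N = 0 \<Longrightarrow> monoQ k (Suc N) b = monoQ k N b"
  by (cases "k \<le> N") (simp_all add: monoQ_def dpQ_0)

lemma monoQ_ext: "(\<forall>j\<ge>M. b j = 0) \<Longrightarrow> M \<le> N \<Longrightarrow> monoQ k N b = monoQ k M b"
proof (induction N)
  case 0 then show ?case by simp
next
  case (Suc N)
  then show ?case by (cases "M = Suc N") (simp_all add: monoQ_Suc)
qed

lemma ff_dpQ: "ff i * dpQ (ff i) n = of_nat (Suc n) * dpQ (ff i) (Suc n)"
proof -
  have a: "complex_of_nat (fact (Suc n)) = of_nat (Suc n) * of_nat (fact n)" by (simp only: fact_Suc of_nat_mult of_nat_id)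
  have b: "complex_of_nat (fact n) \<noteq> 0" "complex_of_nat (Suc n) \<noteq> 0" by (simp, rule of_nat_neq_0)
  have c: "complex_of_nat (Suc n) * (1 / of_nat (fact (Suc n))) = 1 / of_nat (fact n)"
  proof -
    have g: "\<And>x y :: complex. x \<noteq> 0 \<Longrightarrow> y \<noteq> 0 \<Longrightarrow> x * (1 / (x * y)) = 1 / y" by (simp add: field_simps)
    show ?thesis unfolding a by (rule g) (use b in auto)
  qed
  have "of_nat (Suc n) * scQ (1 / of_nat (fact (Suc n))) = scQ (1 / of_nat (fact n))"
    by (simp only: scQ_of_nat[symmetric] scQ_mult[symmetric] c)
  then show ?thesis unfolding dpQ_def
  proof -
    have "ff i * (scQ (1 / of_nat (fact n)) * ff i ^ n) = scQ (1 / of_nat (fact n)) * (ff i * ff i ^ n)"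
      by (rule comm_move) (simp only: scQ_commute)
    also have "\<dots> = (of_nat (Suc n) * scQ (1 / of_nat (fact (Suc n)))) * ff i ^ Suc n"
      by (simp only: \<open>of_nat (Suc n) * scQ (1 / of_nat (fact (Suc n))) = scQ (1 / of_nat (fact n))\<close> power_Suc)
    finally show "ff i * (scQ (1 / of_nat (fact n)) * ff i ^ n) = of_nat (Suc n) * (scQ (1 / of_nat (fact (Suc n))) * ff i ^ Suc n)"
      by (simp only: mult.assoc)
  qed
qed

lemma ff_foldr:
  "distinct js \<Longrightarrow> i \<in> set js \<Longrightarrow>
   ff i * foldr (\<lambda>j acc. dpQ (ff j) (b j) * acc) js 1
   = of_nat (Suc (b i)) * foldr (\<lambda>j acc. dpQ (ff j) ((b(i := Suc (b i))) j) * acc) js 1"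
proof (induction js)
  case Nil then show ?case by simp
next
  case (Cons a js)
  show ?case
  proof (cases "a = i")
    case True
    then have ni: "i \<notin> set js" using Cons by simp
    have eq: "foldr (\<lambda>j acc. dpQ (ff j) (if j = i then Suc (b i) else b j) * acc) js 1
      = foldr (\<lambda>j acc. dpQ (ff j) (b j) * acc) js 1"
      by (rule foldr_cong) (use ni in auto)
    show ?thesis using True by (simp add: eq mult.assoc[symmetric] ff_dpQ)
  next
    case False
    then have IH: "ff i * foldr (\<lambda>j acc. dpQ (ff j) (b j) * acc) js 1
   = of_nat (Suc (b i)) * foldr (\<lambda>j acc. dpQ (ff j) ((b(i := Suc (b i))) j) * acc) js 1"
      using Cons by simp
    have "ff i * (dpQ (ff a) (b a) * foldr (\<lambda>j acc. dpQ (ff j) (b j) * acc) js 1)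
      = dpQ (ff a) (b a) * (ff i * foldr (\<lambda>j acc. dpQ (ff j) (b j) * acc) js 1)"
      by (rule comm_move) (rule ff_comm_FP[OF FP_dpQ])
    also have "\<dots> = of_nat (Suc (b i)) * (dpQ (ff a) (b a) * foldr (\<lambda>j acc. dpQ (ff j) ((b(i := Suc (b i))) j) * acc) js 1)"
      unfolding IH by (rule comm_move) (rule mult_of_nat_commute[symmetric])
    finally show ?thesis using False by simp
  qed
qed

lemma ff_monoQ: "k \<le> i \<Longrightarrow> i < N \<Longrightarrow> ff i * monoQ k N b = of_nat (Suc (b i)) * monoQ k N (b(i := Suc (b i)))"
  using ff_foldr[of "[k..<N]" i b] by (simp add: monoQ_def)

lemma kS_fin: "finite (kS k r s)"
proof (rule finite_subset)
  show "kS k r s \<subseteq> {f. \<forall>x. (x \<in> {..s} \<longrightarrow> f x \<in> {..r}) \<and> (x \<notin> {..s} \<longrightarrow> f x = 0)}"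
  proof (intro subsetI CollectI allI conjI impI)
    fix b x assume b: "b \<in> kS k r s" and x: "x \<in> {..s}"
    then have "b x \<le> (\<Sum>j\<le>s. b j)" by (intro member_le_sum) auto
    then show "b x \<in> {..r}" using b by (simp add: kS_def)
  next
    fix b x assume b: "b \<in> kS k r s" and x: "x \<notin> {..s}" then show "b x = 0" by (simp add: kS_def)
  qed
  show "finite {f. \<forall>x. (x \<in> {..s} \<longrightarrow> f x \<in> {..r}) \<and> (x \<notin> {..s} \<longrightarrow> f x = (0::nat))}"
    by (intro finite_set_of_finite_funs) auto
qed

lemma sum_shrink: "(\<And>l. m < l \<Longrightarrow> l \<le> n \<Longrightarrow> f l = 0) \<Longrightarrow> m \<le> n \<Longrightarrow> (\<Sum>l\<le>n. f l) = (\<Sum>l\<le>m. (f l :: 'a::comm_monoid_add))" for n m :: nat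
  by (rule sum.mono_neutral_right) (auto simp: not_le)

lemma sum_delta_plus: "finite A \<Longrightarrow> j \<in> A \<Longrightarrow> (\<Sum>l\<in>A. f l + (if l = j then c else 0)) = (\<Sum>l\<in>A. f l) + (c :: 'a::comm_monoid_add)"
  by (simp add: sum.distrib)

lemma upd_Suc_eq: "(b(j := Suc (b j))) = (\<lambda>l. b l + (if l = j then 1 else 0))"
  by auto

lemma kS_bump:
  assumes b: "b \<in> kS k (r - 1) (s - j)" and r: "1 \<le> r" and j: "k \<le> j" "j \<le> s"
  shows "b(j := Suc (b j)) \<in> kS k r s"
proof -
  have z: "\<And>l. l < k \<or> s - j < l \<Longrightarrow> b l = 0" and s1: "(\<Sum>l\<le>s-j. b l) = r - 1"
    and s2: "(\<Sum>l\<le>s-j. l * b l) = s - j" using b by (auto simp: kS_def)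
  have e1: "(\<Sum>l\<le>s. b l) = r - 1" using s1 sum_shrink[of "s - j" s b] z by simp
  have e2: "(\<Sum>l\<le>s. l * b l) = s - j" using s2 sum_shrink[of "s - j" s "\<lambda>l. l * b l"] z by simp
  have "(\<Sum>l\<le>s. (b(j := Suc (b j))) l) = (\<Sum>l\<le>s. b l + (if l = j then 1 else 0))"
    by (simp only: upd_Suc_eq)
  also have "\<dots> = r" using e1 r j by (subst sum_delta_plus) auto
  finally have t1: "(\<Sum>l\<le>s. (b(j := Suc (b j))) l) = r" .
  have "(\<Sum>l\<le>s. l * (b(j := Suc (b j))) l) = (\<Sum>l\<le>s. l * b l + (if l = j then j else 0))"
    by (rule sum.cong) auto
  also have "\<dots> = s" using e2 j by (subst sum_delta_plus) auto
  finally have t2: "(\<Sum>l\<le>s. l * (b(j := Suc (b j))) l) = s" .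
  have t0: "\<forall>l. (l < k \<or> s < l) \<longrightarrow> (b(j := Suc (b j))) l = 0" using z j by auto
  show ?thesis using t0 t1 t2 by (simp add: kS_def)
qed

lemma two_le_sum: "finite A \<Longrightarrow> l \<in> A \<Longrightarrow> j \<in> A \<Longrightarrow> l \<noteq> j \<Longrightarrow> f l + f j \<le> (\<Sum>x\<in>A. f x :: nat)"
proof -
  assume "finite A" "l \<in> A" "j \<in> A" "l \<noteq> j"
  then have "(\<Sum>x\<in>{l, j}. f x) \<le> (\<Sum>x\<in>A. f x)" by (intro sum_mono2) auto
  then show ?thesis using \<open>l \<noteq> j\<close> by simp
qed

lemma kS_unbump:
  assumes b: "b \<in> kS k r s" and j: "k \<le> j" "j \<le> s" and pos: "0 < b j"
  shows "b(j := b j - 1) \<in> kS k (r - 1) (s - j)"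
proof -
  have z: "\<And>l. l < k \<or> s < l \<Longrightarrow> b l = 0" and s1: "(\<Sum>l\<le>s. b l) = r"
    and s2: "(\<Sum>l\<le>s. l * b l) = s" using b by (auto simp: kS_def)
  let ?b = "b(j := b j - 1)"
  have bb: "b = (\<lambda>l. ?b l + (if l = j then 1 else 0))" using pos by auto
  have z2: "?b l = 0" if "l < k \<or> s - j < l" for l
  proof (cases "l = j")
    case True
    show ?thesis
    proof (rule ccontr)
      assume "?b l \<noteq> 0"
      then have "2 \<le> b j" using True by simp
      then have "j * 2 \<le> j * b j" by simp
      also have "\<dots> \<le> (\<Sum>l\<le>s. l * b l)" using j by (intro member_le_sum) auto
      finally show False using s2 that True j by auto
    qed
  next
    case False
    show ?thesis
    proof (cases "s < l \<or> l < k")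
      case True then show ?thesis using z False by auto
    next
      case F2: False
      show ?thesis
      proof (rule ccontr)
        assume "?b l \<noteq> 0"
        then have "1 \<le> b l" using False by simp
        have "l * 1 + j * 1 \<le> l * b l + j * b j" using \<open>1 \<le> b l\<close> pos
          by (intro add_mono mult_le_mono) auto
        also have "\<dots> \<le> (\<Sum>l\<le>s. l * b l)" using j F2 False by (intro two_le_sum) auto
        finally show False using s2 that F2 by auto
      qed
    qed
  qed
  have "r = (\<Sum>l\<le>s. ?b l + (if l = j then 1 else 0))" using s1 bb by metis
  also have "\<dots> = (\<Sum>l\<le>s. ?b l) + 1" using j by (subst sum_delta_plus) auto
  finally have e1: "(\<Sum>l\<le>s. ?b l) = r - 1" by simp
  have "s = (\<Sum>l\<le>s. l * (?b l + (if l = j then 1 else 0)))" using s2 bb by metis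
  also have "\<dots> = (\<Sum>l\<le>s. l * ?b l + (if l = j then j else 0))" by (rule sum.cong) auto
  also have "\<dots> = (\<Sum>l\<le>s. l * ?b l) + j" using j by (subst sum_delta_plus) auto
  finally have e2: "(\<Sum>l\<le>s. l * ?b l) = s - j" by simp
  have f1: "(\<Sum>l\<le>s - j. ?b l) = r - 1" using e1 sum_shrink[of "s - j" s ?b] z2 by simp
  have f2: "(\<Sum>l\<le>s - j. l * ?b l) = s - j" using e2 sum_shrink[of "s - j" s "\<lambda>l. l * ?b l"] z2 by simp
  show ?thesis using z2 f1 f2 by (simp add: kS_def)
qed


lemma kS_zero: "b \<in> kS k r s \<Longrightarrow> (j < k \<or> s < j) \<Longrightarrow> b j = 0"
  by (auto simp: kS_def)

lemma kS_sum1: "b \<in> kS k r s \<Longrightarrow> (\<Sum>j\<in>{k..s}. b j) = r"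
proof -
  assume b: "b \<in> kS k r s"
  have "(\<Sum>j\<le>s. b j) = (\<Sum>j\<in>{k..s}. b j)"
    by (rule sum.mono_neutral_right) (auto simp: kS_zero[OF b])
  then show ?thesis using b by (simp add: kS_def)
qed

lemma kS_sum2: "b \<in> kS k r s \<Longrightarrow> (\<Sum>j\<in>{k..s}. j * b j) = s"
proof -
  assume b: "b \<in> kS k r s"
  have "(\<Sum>j\<le>s. j * b j) = (\<Sum>j\<in>{k..s}. j * b j)"
    by (rule sum.mono_neutral_right) (auto simp: kS_zero[OF b])
  then show ?thesis using b by (simp add: kS_def)
qed

lemma W_lemma:
  assumes r: "1 \<le> r"
  shows "(\<Sum>j\<in>{k..s}. of_nat (w j) * (ff j * Pn k (r - 1) (s - j)))
       = (\<Sum>b\<in>kS k r s. of_nat (\<Sum>j\<in>{k..s}. w j * b j) * monoQ k (Suc s) b)"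
proof -
  define g where "g = (\<lambda>(j, b'). of_nat (w j * b' j) * monoQ k (Suc s) b' :: Q)"
  have step1: "of_nat (w j) * (ff j * Pn k (r - 1) (s - j)) = (\<Sum>b\<in>kS k (r - 1) (s - j). g (j, b(j := Suc (b j))))"
    if j: "j \<in> {k..s}" for j
  proof -
    have "Pn k (r - 1) (s - j) = (\<Sum>b\<in>kS k (r - 1) (s - j). monoQ k (Suc s) b)"
      unfolding Pn_def
    proof (rule sum.cong[OF refl])
      fix b assume b: "b \<in> kS k (r - 1) (s - j)"
      show "monoQ k (Suc (s - j)) b = monoQ k (Suc s) b"
        by (rule monoQ_ext[symmetric]) (auto simp: kS_zero[OF b])
    qed
    then have "of_nat (w j) * (ff j * Pn k (r - 1) (s - j))
       = (\<Sum>b\<in>kS k (r - 1) (s - j). of_nat (w j) * (ff j * monoQ k (Suc s) b))"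
      by (simp add: sum_distrib_left)
    also have "\<dots> = (\<Sum>b\<in>kS k (r - 1) (s - j). g (j, b(j := Suc (b j))))"
    proof (rule sum.cong[OF refl])
      fix b
      have "ff j * monoQ k (Suc s) b = of_nat (Suc (b j)) * monoQ k (Suc s) (b(j := Suc (b j)))"
        using j by (intro ff_monoQ) auto
      then show "of_nat (w j) * (ff j * monoQ k (Suc s) b) = g (j, b(j := Suc (b j)))"
        by (simp add: g_def mult.assoc del: of_nat_Suc)
    qed
    finally show ?thesis .
  qed
  have "(\<Sum>j\<in>{k..s}. of_nat (w j) * (ff j * Pn k (r - 1) (s - j)))
      = (\<Sum>j\<in>{k..s}. \<Sum>b\<in>kS k (r - 1) (s - j). g (j, b(j := Suc (b j))))"
    by (rule sum.cong[OF refl]) (rule step1)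
  also have "\<dots> = (\<Sum>p\<in>Sigma {k..s} (\<lambda>j. kS k (r - 1) (s - j)). g (fst p, (snd p)(fst p := Suc (snd p (fst p)))))"
    by (subst sum.Sigma) (auto simp: kS_fin case_prod_unfold)
  also have "\<dots> = (\<Sum>p\<in>{(j, b'). j \<in> {k..s} \<and> b' \<in> kS k r s \<and> 0 < b' j}. g p)"
  proof (rule sum.reindex_bij_witness[where i = "\<lambda>(j, b'). (j, b'(j := b' j - 1))"
        and j = "\<lambda>(j, b). (j, b(j := Suc (b j)))"])
    fix a assume "a \<in> Sigma {k..s} (\<lambda>j. kS k (r - 1) (s - j))"
    then show "(case (case a of (j, b) \<Rightarrow> (j, b(j := Suc (b j)))) of (j, b') \<Rightarrow> (j, b'(j := b' j - 1))) = a"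
      by auto
  next
    fix a assume a: "a \<in> Sigma {k..s} (\<lambda>j. kS k (r - 1) (s - j))"
    then show "(case a of (j, b) \<Rightarrow> (j, b(j := Suc (b j)))) \<in> {(j, b'). j \<in> {k..s} \<and> b' \<in> kS k r s \<and> 0 < b' j}"
      using kS_bump r by auto
  next
    fix a assume "a \<in> {(j, b'). j \<in> {k..s} \<and> b' \<in> kS k r s \<and> 0 < b' j}"
    then show "(case (case a of (j, b') \<Rightarrow> (j, b'(j := b' j - 1))) of (j, b) \<Rightarrow> (j, b(j := Suc (b j)))) = a"
      by auto
  next
    fix a assume "a \<in> {(j, b'). j \<in> {k..s} \<and> b' \<in> kS k r s \<and> 0 < b' j}"
    then show "(case a of (j, b') \<Rightarrow> (j, b'(j := b' j - 1))) \<in> Sigma {k..s} (\<lambda>j. kS k (r - 1) (s - j))"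
      using kS_unbump by auto
  next
    fix a assume "a \<in> Sigma {k..s} (\<lambda>j. kS k (r - 1) (s - j))"
    then show "g (case a of (j, b) \<Rightarrow> (j, b(j := Suc (b j)))) = g (fst a, (snd a)(fst a := Suc (snd a (fst a))))"
      by auto
  qed
  also have "\<dots> = (\<Sum>p\<in>{k..s} \<times> kS k r s. g p)"
  proof (rule sum.mono_neutral_left)
    show "finite ({k..s} \<times> kS k r s)" by (simp add: kS_fin)
    show "{(j, b'). j \<in> {k..s} \<and> b' \<in> kS k r s \<and> 0 < b' j} \<subseteq> {k..s} \<times> kS k r s" by auto
    show "\<forall>i\<in>{k..s} \<times> kS k r s - {(j, b'). j \<in> {k..s} \<and> b' \<in> kS k r s \<and> 0 < b' j}. g i = 0"
    proof
      fix p assume p: "p \<in> {k..s} \<times> kS k r s - {(j, b'). j \<in> {k..s} \<and> b' \<in> kS k r s \<and> 0 < b' j}"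
      obtain j b where pj: "p = (j, b)" by (cases p)
      with p have "b j = 0" by auto
      then show "g p = 0" by (simp add: pj g_def)
    qed
  qed
  also have "\<dots> = (\<Sum>b\<in>kS k r s. \<Sum>j\<in>{k..s}. g (j, b))"
  proof -
    have "sum g ({k..s} \<times> kS k r s) = (\<Sum>j\<in>{k..s}. \<Sum>b\<in>kS k r s. g (j, b))"
      by (simp add: sum.cartesian_product)
    then show ?thesis by (simp add: sum.swap[of _ "{k..s}"])
  qed
  also have "\<dots> = (\<Sum>b\<in>kS k r s. of_nat (\<Sum>j\<in>{k..s}. w j * b j) * monoQ k (Suc s) b)"
    by (simp add: g_def sum_distrib_right)
  finally show ?thesis .
qed

lemma I1n: "1 \<le> r \<Longrightarrow> (\<Sum>j\<in>{k..s}. ff j * Pn k (r - 1) (s - j)) = of_nat r * Pn k r s"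
  using W_lemma[where r=r and k=k and s=s and w="\<lambda>_. 1"] by (simp add: kS_sum1 Pn_def sum_distrib_left)

lemma I2n: "1 \<le> r \<Longrightarrow> (\<Sum>j\<in>{k..s}. of_nat j * (ff j * Pn k (r - 1) (s - j))) = of_nat s * Pn k r s"
  using W_lemma[where r=r and k=k and s=s and w="\<lambda>j. j"] by (simp add: kS_sum2 Pn_def sum_distrib_left)

lemma kS_0: "kS k 0 s = (if s = 0 then {\<lambda>_. 0} else {})"
  apply (auto simp: kS_def)
  apply (rule ext)
  subgoal for x j by (cases j) auto
  done

lemma monoQ_zero: "monoQ k N (\<lambda>_. 0) = 1"
proof -
  have "foldr (\<lambda>j acc. dpQ (ff j) 0 * acc) js 1 = 1" for js
    by (induct js) (simp_all add: dpQ_0)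
  then show ?thesis by (simp add: monoQ_def)
qed

lemma Pn_0: "Pn k 0 s = (if s = 0 then 1 else 0)"
  by (simp add: Pn_def kS_0 monoQ_zero)

lemma kS_lower: "b \<in> kS k r s \<Longrightarrow> k * r \<le> s"
proof -
  assume b: "b \<in> kS k r s"
  have "k * r = (\<Sum>j\<in>{k..s}. k * b j)" by (simp add: kS_sum1[OF b, symmetric] sum_distrib_left)
  also have "\<dots> \<le> (\<Sum>j\<in>{k..s}. j * b j)" by (intro sum_mono) auto
  also have "\<dots> = s" by (rule kS_sum2[OF b])
  finally show ?thesis .
qed

lemma Pn_small: "s < k * r \<Longrightarrow> Pn k r s = 0"
proof -
  assume "s < k * r"
  then have "kS k r s = {}" using kS_lower by fastforce
  then show ?thesis by (simp add: Pn_def)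
qed

lemma P_neg1: "r < 0 \<Longrightarrow> P k r t = 0" by (simp add: P_def)
lemma P_neg2: "t < 0 \<Longrightarrow> P k r t = 0" by (simp add: P_def)

lemma sum_restrict_nat:
  fixes f :: "nat \<Rightarrow> Q"
  assumes "\<And>j. s < j \<Longrightarrow> f j = 0" "s \<le> N"
  shows "(\<Sum>j\<in>{k..N}. f j) = (\<Sum>j\<in>{k..s}. f j)"
  by (rule sum.mono_neutral_right) (use assms in auto)

lemma I1:
  fixes r t :: int
  assumes "t \<le> int N"
  shows "(\<Sum>j\<in>{k..N}. ff j * P k (r - 1) (t - int j)) = of_int r * P k r t"
proof (cases "r \<le> 0 \<or> t < 0")
  case True
  then show ?thesis by (cases "r = 0") (auto simp: P_def)
next
  case False
  define s where "s = nat t"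
  define r' where "r' = nat r"
  have ts: "t = int s" "r = int r'" "1 \<le> r'" using False by (auto simp: s_def r'_def)
  have "(\<Sum>j\<in>{k..N}. ff j * P k (r - 1) (t - int j)) = (\<Sum>j\<in>{k..s}. ff j * P k (r - 1) (t - int j))"
    by (rule sum_restrict_nat) (use assms ts in \<open>auto simp: P_def\<close>)
  also have "\<dots> = (\<Sum>j\<in>{k..s}. ff j * Pn k (r' - 1) (s - j))"
    by (rule sum.cong[OF refl]) (use ts in \<open>auto simp: P_def nat_diff_distrib\<close>)
  also have "\<dots> = of_nat r' * Pn k r' s" by (rule I1n) (use ts in auto)
  finally show ?thesis using ts by (simp add: P_def)
qed

lemma I2:
  fixes r t :: int
  assumes "t \<le> int N"
  shows "(\<Sum>j\<in>{k..N}. of_nat j * (ff j * P k (r - 1) (t - int j))) = of_int t * P k r t"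
proof (cases "r \<le> 0 \<or> t < 0")
  case True
  then show ?thesis
  proof (cases "r = 0 \<and> 0 \<le> t")
    case True
    then show ?thesis by (cases "t = 0") (auto simp: P_def Pn_0)
  qed (auto simp: P_def)
next
  case False
  define s where "s = nat t"
  define r' where "r' = nat r"
  have ts: "t = int s" "r = int r'" "1 \<le> r'" using False by (auto simp: s_def r'_def)
  have "(\<Sum>j\<in>{k..N}. of_nat j * (ff j * P k (r - 1) (t - int j))) = (\<Sum>j\<in>{k..s}. of_nat j * (ff j * P k (r - 1) (t - int j)))"
    by (rule sum_restrict_nat) (use assms ts in \<open>auto simp: P_def\<close>)
  also have "\<dots> = (\<Sum>j\<in>{k..s}. of_nat j * (ff j * Pn k (r' - 1) (s - j)))"
    by (rule sum.cong[OF refl]) (use ts in \<open>auto simp: P_def nat_diff_distrib\<close>)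
  also have "\<dots> = of_nat s * Pn k r' s" by (rule I2n) (use ts in auto)
  finally show ?thesis using ts by (simp add: P_def)
qed


definition cm :: "Q \<Rightarrow> Q \<Rightarrow> Q" where "cm x y = x * y - y * x"

lemma cm_add_right: "cm x (y + z) = cm x y + cm x z" by (simp add: cm_def algebra_simps)
lemma cm_diff_right: "cm x (y - z) = cm x y - cm x z" by (simp add: cm_def algebra_simps)
lemma cm_uminus_right: "cm x (- y) = - cm x y" by (simp add: cm_def algebra_simps)
lemma cm_zero: "cm x 0 = 0" by (simp add: cm_def)
lemma cm_sum_right: "cm x (sum f A) = (\<Sum>a\<in>A. cm x (f a))"
  by (induction A rule: infinite_finite_induct) (simp_all add: cm_add_right cm_zero)
lemma cm_mult_right: "cm x (y * z) = cm x y * z + y * cm x z" by (simp add: cm_def algebra_simps)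
lemma cm_of_int_right: "cm x (of_int c * y) = of_int c * cm x y"
  by (simp add: cm_def algebra_simps mult_of_int_commute)
lemma cm_of_int: "cm x (of_int c) = 0" by (simp add: cm_def mult_of_int_commute)
lemma cm_one: "cm x 1 = 0" by (simp add: cm_def)

lemma cm_hf: "cm (hh a) (ff b) = - (2 * ff (a + b))" using rel_HF[of a b] by (simp add: cm_def)
lemma cm_ef: "cm (ee 0) (ff j) = hh j" using rel_EF[of j] by (simp add: cm_def)

lemma P_0: "P k 0 t = (if t = 0 then 1 else 0)"
  by (auto simp: P_def Pn_0)

lemma cm_P0: "cm x (P k 0 t) = 0" by (simp add: P_0 cm_zero cm_one)

lemma two_comm: "(x::Q) * (2 * y) = 2 * (x * y)" by (simp add: mult_2 distrib_left)
lemma of_nat_two_comm: "2 * (of_nat r * (y::Q)) = of_nat r * (2 * y)"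
  by (simp add: mult_2 distrib_left)

lemma cancel_int: "n \<noteq> 0 \<Longrightarrow> of_int n * (x::Q) = of_int n * y \<Longrightarrow> x = y"
proof -
  assume n: "n \<noteq> 0" and e: "of_int n * x = of_int n * y"
  have one: "scQ (1 / of_int n) * of_int n = 1"
    using n by (simp add: scQ_of_int[symmetric] scQ_mult[symmetric] scQ_1)
  have "x = (scQ (1 / of_int n) * of_int n) * x" by (simp add: one)
  also have "\<dots> = (scQ (1 / of_int n) * of_int n) * y" by (simp only: mult.assoc e)
  also have "\<dots> = y" by (simp add: one)
  finally show ?thesis .
qed

lemma double_swap:
  "(\<Sum>j\<in>A. ff j * (\<Sum>i\<in>B. ff (c + i) * X i j)) = (\<Sum>i\<in>B. ff (c + i) * (\<Sum>j\<in>A. ff j * X i j))"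
proof -
  have "(\<Sum>j\<in>A. ff j * (\<Sum>i\<in>B. ff (c + i) * X i j)) = (\<Sum>j\<in>A. \<Sum>i\<in>B. ff (c + i) * (ff j * X i j))"
    by (simp add: sum_distrib_left comm_move[OF rel_FF])
  also have "\<dots> = (\<Sum>i\<in>B. \<Sum>j\<in>A. ff (c + i) * (ff j * X i j))" by (rule sum.swap)
  also have "\<dots> = (\<Sum>i\<in>B. ff (c + i) * (\<Sum>j\<in>A. ff j * X i j))" by (simp add: sum_distrib_left)
  finally show ?thesis .
qed

lemma H_lemma:
  "t \<le> int N \<Longrightarrow> cm (hh a) (P k (int r) t) = - (2 * (\<Sum>j\<in>{k..N}. ff (a + j) * P k (int r - 1) (t - int j)))"
proof (induction r arbitrary: t)
  case 0
  then show ?case by (simp add: cm_P0 P_neg1)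
next
  case (Suc r)
  define n where "n = int (Suc r)"
  have n1: "n - 1 = int r" by (simp add: n_def)
  define S where "S = (\<Sum>i\<in>{k..N}. ff (a + i) * P k (int r) (t - int i))"
  have I: "of_int n * P k n t = (\<Sum>j\<in>{k..N}. ff j * P k (int r) (t - int j))"
    using I1[OF Suc.prems, of k n] by (simp add: n1)
  have "of_int n * cm (hh a) (P k n t) = cm (hh a) (of_int n * P k n t)" by (simp add: cm_of_int_right)
  also have "\<dots> = (\<Sum>j\<in>{k..N}. cm (hh a) (ff j) * P k (int r) (t - int j) + ff j * cm (hh a) (P k (int r) (t - int j)))"
    by (simp add: I cm_sum_right cm_mult_right)
  also have "\<dots> = (\<Sum>j\<in>{k..N}. - (2 * (ff (a + j) * P k (int r) (t - int j))) + ff j * - (2 * (\<Sum>i\<in>{k..N}. ff (a + i) * P k (int r - 1) (t - int j - int i))))"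
    by (rule sum.cong[OF refl]) (use Suc.prems in \<open>simp add: cm_hf Suc.IH mult.assoc\<close>)
  also have "\<dots> = (\<Sum>j\<in>{k..N}. - (2 * (ff (a + j) * P k (int r) (t - int j))) - 2 * (ff j * (\<Sum>i\<in>{k..N}. ff (a + i) * P k (int r - 1) (t - int j - int i))))"
    by (simp only: two_comm mult_minus_right diff_conv_add_uminus)
  also have "\<dots> = - (2 * S) - 2 * (\<Sum>j\<in>{k..N}. ff j * (\<Sum>i\<in>{k..N}. ff (a + i) * P k (int r - 1) (t - int j - int i)))"
    by (simp only: sum_subtractf sum_negf sum_distrib_left[symmetric] S_def)
  also have "(\<Sum>j\<in>{k..N}. ff j * (\<Sum>i\<in>{k..N}. ff (a + i) * P k (int r - 1) (t - int j - int i)))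
      = (\<Sum>i\<in>{k..N}. ff (a + i) * (\<Sum>j\<in>{k..N}. ff j * P k (int r - 1) (t - int j - int i)))"
    by (rule double_swap)
  also have "\<dots> = (\<Sum>i\<in>{k..N}. ff (a + i) * (of_nat r * P k (int r) (t - int i)))"
  proof (rule sum.cong[OF refl])
    fix i assume i: "i \<in> {k..N}"
    have "(\<Sum>j\<in>{k..N}. ff j * P k (int r - 1) (t - int j - int i)) = (\<Sum>j\<in>{k..N}. ff j * P k (int r - 1) (t - int i - int j))"
      by (rule sum.cong[OF refl]) (simp add: algebra_simps)
    also have "\<dots> = of_int (int r) * P k (int r) (t - int i)"
      by (rule I1) (use Suc.prems in auto)
    finally show "ff (a + i) * (\<Sum>j\<in>{k..N}. ff j * P k (int r - 1) (t - int j - int i)) = ff (a + i) * (of_nat r * P k (int r) (t - int i))"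
      by simp
  qed
  also have "\<dots> = of_nat r * S"
    unfolding S_def sum_distrib_left
    by (rule sum.cong[OF refl], rule comm_move, rule mult_of_nat_commute[symmetric])
  also have "- (2 * S) - 2 * (of_nat r * S) = of_int n * - (2 * S)"
    by (simp add: n_def of_nat_two_comm algebra_simps)
  finally have "of_int n * cm (hh a) (P k n t) = of_int n * - (2 * S)" .
  then have "cm (hh a) (P k n t) = - (2 * S)" by (rule cancel_int[rotated]) (simp add: n_def)
  then show ?case by (simp add: n_def S_def)
qed


lemma swapH: "(\<Sum>j\<in>A. ff j * (\<Sum>i\<in>B. X i j * hh i)) = (\<Sum>i\<in>B. (\<Sum>j\<in>A. ff j * X i j) * hh i)"
proof -
  have "(\<Sum>j\<in>A. ff j * (\<Sum>i\<in>B. X i j * hh i)) = (\<Sum>j\<in>A. \<Sum>i\<in>B. ff j * X i j * hh i)"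
    by (simp add: sum_distrib_left mult.assoc)
  also have "\<dots> = (\<Sum>i\<in>B. \<Sum>j\<in>A. ff j * X i j * hh i)" by (rule sum.swap)
  also have "\<dots> = (\<Sum>i\<in>B. (\<Sum>j\<in>A. ff j * X i j) * hh i)" by (simp add: sum_distrib_right)
  finally show ?thesis .
qed

lemma swap3: "(\<Sum>j\<in>A. ff j * (\<Sum>i\<in>B. \<Sum>l\<in>C. ff (i + l) * X i l j))
   = (\<Sum>i\<in>B. \<Sum>l\<in>C. ff (i + l) * (\<Sum>j\<in>A. ff j * X i l j))"
proof -
  have "(\<Sum>j\<in>A. ff j * (\<Sum>i\<in>B. \<Sum>l\<in>C. ff (i + l) * X i l j))
     = (\<Sum>j\<in>A. \<Sum>i\<in>B. \<Sum>l\<in>C. ff (i + l) * (ff j * X i l j))"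
    by (simp add: sum_distrib_left comm_move[OF rel_FF])
  also have "\<dots> = (\<Sum>i\<in>B. \<Sum>j\<in>A. \<Sum>l\<in>C. ff (i + l) * (ff j * X i l j))" by (rule sum.swap)
  also have "\<dots> = (\<Sum>i\<in>B. \<Sum>l\<in>C. \<Sum>j\<in>A. ff (i + l) * (ff j * X i l j))"
    by (rule sum.cong[OF refl]) (rule sum.swap)
  also have "\<dots> = (\<Sum>i\<in>B. \<Sum>l\<in>C. ff (i + l) * (\<Sum>j\<in>A. ff j * X i l j))" by (simp add: sum_distrib_left)
  finally show ?thesis .
qed

lemma E_lemma:
  "t \<le> int N \<Longrightarrow> cm (ee 0) (P k (int r) t) = (\<Sum>j\<in>{k..N}. P k (int r - 1) (t - int j) * hh j)
     - (\<Sum>i\<in>{k..N}. \<Sum>j\<in>{k..N}. ff (i + j) * P k (int r - 2) (t - int i - int j))"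
proof (induction r arbitrary: t)
  case 0
  then show ?case by (simp add: cm_P0 P_neg1)
next
  case (Suc r)
  define n where "n = int (Suc r)"
  define A where "A = (\<Sum>j\<in>{k..N}. P k (int r) (t - int j) * hh j)"
  define B where "B = (\<Sum>i\<in>{k..N}. \<Sum>j\<in>{k..N}. ff (i + j) * P k (int r - 1) (t - int i - int j))"
  have I: "of_int n * P k n t = (\<Sum>j\<in>{k..N}. ff j * P k (int r) (t - int j))"
    using I1[OF Suc.prems, of k n] by (simp add: n_def)
  have hP: "hh j * P k (int r) (t - int j) = P k (int r) (t - int j) * hh j
      - 2 * (\<Sum>i\<in>{k..N}. ff (j + i) * P k (int r - 1) (t - int j - int i))" for j
    using H_lemma[of "t - int j" N j k r] Suc.prems by (simp add: cm_def algebra_simps)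
  have "of_int n * cm (ee 0) (P k n t) = cm (ee 0) (of_int n * P k n t)" by (simp add: cm_of_int_right)
  also have "\<dots> = (\<Sum>j\<in>{k..N}. cm (ee 0) (ff j) * P k (int r) (t - int j) + ff j * cm (ee 0) (P k (int r) (t - int j)))"
    by (simp add: I cm_sum_right cm_mult_right)
  also have "\<dots> = (\<Sum>j\<in>{k..N}. (P k (int r) (t - int j) * hh j
      - 2 * (\<Sum>i\<in>{k..N}. ff (j + i) * P k (int r - 1) (t - int j - int i)))
      + (ff j * (\<Sum>i\<in>{k..N}. P k (int r - 1) (t - int j - int i) * hh i)
         - ff j * (\<Sum>i\<in>{k..N}. \<Sum>l\<in>{k..N}. ff (i + l) * P k (int r - 2) (t - int j - int i - int l))))"
    by (rule sum.cong[OF refl]) (use Suc.prems in \<open>simp add: cm_ef Suc.IH hP right_diff_distrib\<close>)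
  also have "\<dots> = A - 2 * B + (\<Sum>j\<in>{k..N}. ff j * (\<Sum>i\<in>{k..N}. P k (int r - 1) (t - int j - int i) * hh i))
       - (\<Sum>j\<in>{k..N}. ff j * (\<Sum>i\<in>{k..N}. \<Sum>l\<in>{k..N}. ff (i + l) * P k (int r - 2) (t - int j - int i - int l)))"
    by (simp only: sum.distrib sum_subtractf sum_distrib_left[symmetric] A_def B_def add_diff_eq)
  also have "(\<Sum>j\<in>{k..N}. ff j * (\<Sum>i\<in>{k..N}. P k (int r - 1) (t - int j - int i) * hh i)) = of_nat r * A"
  proof -
    have "(\<Sum>j\<in>{k..N}. ff j * (\<Sum>i\<in>{k..N}. P k (int r - 1) (t - int j - int i) * hh i))
        = (\<Sum>i\<in>{k..N}. (\<Sum>j\<in>{k..N}. ff j * P k (int r - 1) (t - int j - int i)) * hh i)"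
      by (rule swapH)
    also have "\<dots> = (\<Sum>i\<in>{k..N}. (of_nat r * P k (int r) (t - int i)) * hh i)"
    proof (rule sum.cong[OF refl])
      fix i assume i: "i \<in> {k..N}"
      have "(\<Sum>j\<in>{k..N}. ff j * P k (int r - 1) (t - int j - int i)) = (\<Sum>j\<in>{k..N}. ff j * P k (int r - 1) (t - int i - int j))"
        by (rule sum.cong[OF refl]) (simp add: algebra_simps)
      also have "\<dots> = of_int (int r) * P k (int r) (t - int i)"
        by (rule I1) (use Suc.prems in auto)
      finally show "(\<Sum>j\<in>{k..N}. ff j * P k (int r - 1) (t - int j - int i)) * hh i = (of_nat r * P k (int r) (t - int i)) * hh i"
        by simp
    qed
    also have "\<dots> = of_nat r * A" by (simp add: A_def sum_distrib_left mult.assoc)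
    finally show ?thesis .
  qed
  also have "(\<Sum>j\<in>{k..N}. ff j * (\<Sum>i\<in>{k..N}. \<Sum>l\<in>{k..N}. ff (i + l) * P k (int r - 2) (t - int j - int i - int l)))
      = of_int (int r - 1) * B"
  proof -
    have "(\<Sum>j\<in>{k..N}. ff j * (\<Sum>i\<in>{k..N}. \<Sum>l\<in>{k..N}. ff (i + l) * P k (int r - 2) (t - int j - int i - int l)))
      = (\<Sum>i\<in>{k..N}. \<Sum>l\<in>{k..N}. ff (i + l) * (\<Sum>j\<in>{k..N}. ff j * P k (int r - 2) (t - int j - int i - int l)))"
      by (rule swap3)
    also have "\<dots> = (\<Sum>i\<in>{k..N}. \<Sum>l\<in>{k..N}. ff (i + l) * (of_int (int r - 1) * P k (int r - 1) (t - int i - int l)))"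
    proof (intro sum.cong[OF refl])
      fix i l assume i: "i \<in> {k..N}" and l: "l \<in> {k..N}"
      have "(\<Sum>j\<in>{k..N}. ff j * P k (int r - 2) (t - int j - int i - int l)) = (\<Sum>j\<in>{k..N}. ff j * P k ((int r - 1) - 1) (t - int i - int l - int j))"
        by (rule sum.cong[OF refl]) (simp add: algebra_simps)
      also have "\<dots> = of_int (int r - 1) * P k (int r - 1) (t - int i - int l)"
        by (rule I1) (use Suc.prems in auto)
      finally show "ff (i + l) * (\<Sum>j\<in>{k..N}. ff j * P k (int r - 2) (t - int j - int i - int l)) = ff (i + l) * (of_int (int r - 1) * P k (int r - 1) (t - int i - int l))"
        by simp
    qed
    also have "\<dots> = of_int (int r - 1) * B"
      unfolding B_def sum_distrib_left
      by (intro sum.cong[OF refl], rule comm_move, rule mult_of_int_commute[symmetric])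
    finally show ?thesis .
  qed
  also have "A - 2 * B + of_nat r * A - of_int (int r - 1) * B = of_int n * (A - B)"
    by (simp add: n_def algebra_simps mult_2)
  finally have "of_int n * cm (ee 0) (P k n t) = of_int n * (A - B)" .
  then have "cm (ee 0) (P k n t) = A - B" by (rule cancel_int[rotated]) (simp add: n_def)
  then show ?case by (simp add: n_def A_def B_def)
qed


lemma counting:
  fixes g :: "nat \<Rightarrow> Q"
  assumes k: "0 < k" and gz: "\<And>m. N < m \<Longrightarrow> g m = 0"
  shows "(\<Sum>i\<in>{k..N}. \<Sum>j\<in>{k..N}. g (i + j)) = (\<Sum>m\<in>{k..N}. of_nat (m + 1 - 2 * k) * g m)"
proof -
  have inner: "(\<Sum>j\<in>{k..N}. g (i + j)) = (\<Sum>m\<in>{k..N}. if k + i \<le> m then g m else 0)" if i: "i \<in> {k..N}" for i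
  proof -
    have "(\<Sum>j\<in>{k..N}. g (i + j)) = (\<Sum>m\<in>{k + i..N + i}. g m)"
      unfolding sum.shift_bounds_cl_nat_ivl by (simp add: add.commute)
    also have "\<dots> = (\<Sum>m\<in>{k + i..N}. g m)"
      by (rule sum.mono_neutral_right) (auto simp: gz)
    also have "\<dots> = (\<Sum>m\<in>{m\<in>{k..N}. k + i \<le> m}. g m)"
      by (rule sum.cong) auto
    also have "\<dots> = (\<Sum>m\<in>{k..N}. if k + i \<le> m then g m else 0)"
      by (rule sum.inter_filter) simp
    finally show ?thesis .
  qed
  have "(\<Sum>i\<in>{k..N}. \<Sum>j\<in>{k..N}. g (i + j)) = (\<Sum>i\<in>{k..N}. \<Sum>m\<in>{k..N}. if k + i \<le> m then g m else 0)"
    by (rule sum.cong[OF refl]) (rule inner)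
  also have "\<dots> = (\<Sum>m\<in>{k..N}. \<Sum>i\<in>{k..N}. if k + i \<le> m then g m else 0)" by (rule sum.swap)
  also have "\<dots> = (\<Sum>m\<in>{k..N}. of_nat (m + 1 - 2 * k) * g m)"
  proof (rule sum.cong[OF refl])
    fix m assume m: "m \<in> {k..N}"
    have "(\<Sum>i\<in>{k..N}. if k + i \<le> m then g m else 0) = (\<Sum>i\<in>{i\<in>{k..N}. k + i \<le> m}. g m)"
      by (rule sum.inter_filter[symmetric]) simp
    also have "{i\<in>{k..N}. k + i \<le> m} = {k..m - k}" using m by auto
    also have "(\<Sum>i\<in>{k..m - k}. g m) = of_nat (m + 1 - 2 * k) * g m"
    proof -
      have "card {k..m - k} = m + 1 - 2 * k" using k by simp
      then show ?thesis by simp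
    qed
    finally show "(\<Sum>i\<in>{k..N}. if k + i \<le> m then g m else 0) = of_nat (m + 1 - 2 * k) * g m" .
  qed
  finally show ?thesis .
qed


lemma P_nat: "P k (int a) (int b) = Pn k a b" by (simp add: P_def)

lemma main_Q:
  assumes r: "0 < r" and s: "0 < s" and k: "0 < k" and c: "k * r + K \<le> r + s"
  shows "cm (ee 0) (Pn k r s) \<in> TQ k K"
proof (cases "s < k * r")
  case True
  then show ?thesis by (simp add: Pn_small cm_zero TQ_0)
next
  case False
  then have skr: "k * r \<le> s" by simp
  define X where "X m = ff m * P k (int r - 2) (int s - int m)" for m
  define Pr1 where "Pr1 = P k (int r - 1) (int s)"
  define A where "A = (\<Sum>j\<in>{k..s}. P k (int r - 1) (int s - int j) * hh j)"
  define Rr where "Rr = (\<Sum>m\<in>{k..s}. of_nat (2 * k - 1 - m) * X m)"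
  have E: "cm (ee 0) (Pn k r s) = A - (\<Sum>i\<in>{k..s}. \<Sum>j\<in>{k..s}. ff (i + j) * P k (int r - 2) (int s - int i - int j))"
    using E_lemma[of "int s" s k r] by (simp add: P_nat A_def)
  have B: "(\<Sum>i\<in>{k..s}. \<Sum>j\<in>{k..s}. ff (i + j) * P k (int r - 2) (int s - int i - int j))
      = (\<Sum>m\<in>{k..s}. of_nat (m + 1 - 2 * k) * X m)"
  proof -
    have "(\<Sum>i\<in>{k..s}. \<Sum>j\<in>{k..s}. ff (i + j) * P k (int r - 2) (int s - int i - int j))
        = (\<Sum>i\<in>{k..s}. \<Sum>j\<in>{k..s}. X (i + j))"
      by (simp add: X_def algebra_simps)
    also have "\<dots> = (\<Sum>m\<in>{k..s}. of_nat (m + 1 - 2 * k) * X m)"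
      by (rule counting[OF k]) (simp add: X_def P_neg2)
    finally show ?thesis .
  qed
  have I1': "(\<Sum>m\<in>{k..s}. X m) = of_int (int r - 1) * Pr1"
    using I1[of "int s" s k "int r - 1"] by (simp add: X_def Pr1_def)
  have I2': "(\<Sum>m\<in>{k..s}. of_nat m * X m) = of_int (int s) * Pr1"
    using I2[of "int s" s k "int r - 1"] by (simp add: X_def Pr1_def)
  have coef: "(of_nat (m + 1 - 2 * k) :: Q) = of_nat m - of_nat (2 * k - 1) + of_nat (2 * k - 1 - m)" for m
  proof -
    have "int (m + 1 - 2 * k) = int m - int (2 * k - 1) + int (2 * k - 1 - m)" using k by linarith
    then have "(of_int (int (m + 1 - 2 * k)) :: Q) = of_int (int m - int (2 * k - 1) + int (2 * k - 1 - m))" by simp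
    then show ?thesis by simp
  qed
  have Bsum: "(\<Sum>m\<in>{k..s}. of_nat (m + 1 - 2 * k) * X m)
     = of_int (int s) * Pr1 - of_nat (2 * k - 1) * (of_int (int r - 1) * Pr1) + Rr"
  proof -
    have "(\<Sum>m\<in>{k..s}. of_nat (m + 1 - 2 * k) * X m)
       = (\<Sum>m\<in>{k..s}. of_nat m * X m) - of_nat (2 * k - 1) * (\<Sum>m\<in>{k..s}. X m) + Rr"
    proof -
      have "(\<Sum>m\<in>{k..s}. of_nat (m + 1 - 2 * k) * X m)
         = (\<Sum>m\<in>{k..s}. of_nat m * X m - of_nat (2 * k - 1) * X m + of_nat (2 * k - 1 - m) * X m)"
        by (rule sum.cong[OF refl]) (simp only: coef distrib_right left_diff_distrib)
      also have "\<dots> = (\<Sum>m\<in>{k..s}. of_nat m * X m) - of_nat (2 * k - 1) * (\<Sum>m\<in>{k..s}. X m) + Rr"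
        by (simp only: sum.distrib sum_subtractf sum_distrib_left Rr_def)
      finally show ?thesis .
    qed
    then show ?thesis by (simp add: I1' I2')
  qed
  have cmeq: "cm (ee 0) (Pn k r s) = A - (of_int (int s) * Pr1 - of_nat (2 * k - 1) * (of_int (int r - 1) * Pr1) + Rr)"
    using E B Bsum by simp
  have A_in: "A \<in> TQ k K"
    unfolding A_def
  proof (rule TQ_sum)
    fix j assume j: "j \<in> {k..s}"
    have "P k (int r - 1) (int s - int j) = Pn k (r - 1) (s - j)"
      using j r by (simp add: P_def nat_diff_distrib of_nat_diff)
    then show "P k (int r - 1) (int s - int j) * hh j \<in> TQ k K"
      using j k by (simp add: TQ_PH)
  qed
  have Pr1_in: "Pr1 \<in> TQ k K"
  proof (cases "r = 1")
    case True
    then show ?thesis using s by (simp add: Pr1_def P_0 TQ_0)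
  next
    case False
    then have r2: "2 \<le> r" using r by simp
    have "Pr1 = q (Mon []) * Pn k (r - 1) s"
      using r2 by (simp add: Pr1_def P_def Mon_Nil q_1 of_nat_diff nat_diff_distrib)
    also have "\<dots> \<in> TQ k K"
    proof (rule TQ_P)
      show "pos_word []" by (simp add: pos_word_def)
      show "0 < r - 1" "0 < s" using r2 s by auto
      have "k * (r - 1) = k * r - k" by (simp add: diff_mult_distrib2)
      moreover have "k \<le> k * r" using r by simp
      ultimately show "k * (r - 1) + K \<le> r - 1 + s" using c k r2 by linarith
    qed
    finally show ?thesis .
  qed
  have R_in: "Rr \<in> TQ k K"
    unfolding Rr_def
  proof (rule TQ_sum)
    fix m assume m: "m \<in> {k..s}"
    show "of_nat (2 * k - 1 - m) * X m \<in> TQ k K"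
    proof (cases "2 * k - 1 - m = 0")
      case True
      then show ?thesis by (simp add: TQ_0)
    next
      case False
      then have m2: "m + 2 \<le> 2 * k" by simp
      have "X m \<in> TQ k K"
      proof (cases "r \<le> 2")
        case True
        have "X m = 0"
        proof (cases "r = 1")
          case True then show ?thesis by (simp add: X_def P_neg1)
        next
          case False
          with True r have "r = 2" by simp
          moreover have "m < s" using skr m2 \<open>r = 2\<close> by simp
          ultimately show ?thesis by (simp add: X_def P_0)
        qed
        then show ?thesis by (simp add: TQ_0)
      next
        case False
        then have r3: "3 \<le> r" by simp
        have ms: "m < s"
        proof -
          have "3 * k \<le> k * r" using r3 by simp
          then show ?thesis using skr m2 by linarith
        qed
        have "X m = ff m * Pn k (r - 2) (s - m)"
          using r3 ms m by (simp add: X_def P_def of_nat_diff nat_diff_distrib)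
        also have "\<dots> \<in> TQ k K"
        proof (rule TQ_fP)
          show "1 \<le> m" using m k by simp
          show "0 < r - 2" "0 < s - m" using r3 ms by auto
          have "k * (r - 2) = k * r - 2 * k" by (simp add: diff_mult_distrib2)
          moreover have "2 * k \<le> k * r" using r3 by simp
          ultimately show "k * (r - 2) + K \<le> r - 2 + (s - m)" using c m2 r3 ms by linarith
        qed
        finally show ?thesis .
      qed
      then show ?thesis using TQ_of_int[of "X m" k K "int (2 * k - 1 - m)"] by simp
    qed
  qed
  have "of_nat (2 * k - 1) * (of_int (int r - 1) * Pr1) \<in> TQ k K"
    using TQ_of_int[OF TQ_of_int[OF Pr1_in, of "int r - 1"], of "int (2 * k - 1)"] by simp
  then show ?thesis unfolding cmeq
    by (intro TQ_diff TQ_add A_in R_in TQ_of_int Pr1_in)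
qed

theorem proposition2p5:
  fixes r s k K :: nat
  assumes "0 < r" and "0 < s" and "0 < k" and "k * r + K \<le> r + s"
  shows "fa_comm (fa_gen (E 0)) (kx F k r s) \<in> fa_span
          ({fa_mult (fa_mon u) (kx F k r' s') | u r' s'.
               pos_word u \<and> 0 < r' \<and> 0 < s' \<and> k * r' + K \<le> r' + s'}
           \<union> {fa_mult (fa_mon u) (fa_gen g) | u g. pos_word u \<and> is_borel g \<and> 1 \<le> deg g}
           \<union> U_rels)"
proof -
  let ?x = "Gn (E 0) * KXR k r s - KXR k r s * Gn (E 0)"
  have "q ?x = cm (ee 0) (Pn k r s)"
    by (simp add: q_minus q_mult q_KXR ee_def cm_def)
  then have "q ?x \<in> TQ k K" using main_Q[OF assms] by simp
  then have "?x \<in> Tset k K" by (rule TQ_back)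
  then have "lk ?x \<in> fa_span
          ({fa_mult (fa_mon u) (kx F k r' s') | u r' s'.
               pos_word u \<and> 0 < r' \<and> 0 < s' \<and> k * r' + K \<le> r' + s'}
           \<union> {fa_mult (fa_mon u) (fa_gen g) | u g. pos_word u \<and> is_borel g \<and> 1 \<le> deg g}
           \<union> U_rels)" by (rule lk_Tset)
  moreover have "lk ?x = fa_comm (fa_gen (E 0)) (kx F k r s)"
    by (simp add: lk_minus lookup_mult_fa lk_Gn lk_KXR fa_comm_def)
  ultimately show ?thesis by simp
qed


end
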